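(* In the model of the context, suppose $F_e$ is an equilibrium arrival distribution for the variant in which walk-ins may only arrive in $[0,T]$, and suppose $F_e$ has no atom at $0$. Then $F_e$ is also an equilibrium arrival distribution for the variant in which walk-ins may arrive at any time in $(-\infty,T]$.
   Context: Model: single server that starts serving at time $0$ (no service before $0$; in the early-arrival variant, walk-ins arriving before $0$ queue in arrival order), walk-ins admitted up to time $T$, service times i.i.d. exponential with rate $\mu$, $M$ scheduled customers at deterministic times $0\le\tau_1<\dots<\tau_M\le T$ with non-preemptive priority over walk-ins (otherwise FCFS; simultaneous walk-ins ordered uniformly at random), Poisson($\lambda$) number of walk-ins each independently choosing its arrival time from a common cdf $F$ on the admissible set ($[0,T]$ or $(-\infty,T]$). Waiting time = time from arrival until start of service; $E_w(t)$ is the expected waiting time of a walk-in arriving at $t$ when all others use $F$. $F_e$ is an equilibrium arrival distribution (for a given admissible set) if there is a constant $E_w$ with $E_w(t)=E_w$ on the support of $F_e$ and $E_w(t)\ge E_w$ at every admissible $t$ outside it. An atom at $0$ means $F_e(0)>0$. *)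

theory Defs
  imports "HOL-Probability.Probability"
begin

type_synonym cust = "real \<times> bool \<times> real \<times> real"

definition arr :: "cust \<Rightarrow> real" where "arr c = fst c"
definition sched :: "cust \<Rightarrow> bool" where "sched c = fst (snd c)"
definition tkey :: "cust \<Rightarrow> real" where "tkey c = fst (snd (snd c))"
definition serv :: "cust \<Rightarrow> real" where "serv c = snd (snd (snd c))"

text \<open>Strict service priority among customers present in the queue:
  scheduled customers before walk-ins (non-preemptive priority), otherwise
  FCFS by arrival time, ties broken by the (uniformly random) key.\<close>
definition before :: "cust \<Rightarrow> cust \<Rightarrow> bool" where
  "before c d \<longleftrightarrow> (sched c \<and> \<not> sched d) \<or>
     (sched c = sched d \<and> (arr c < arr d \<or> (arr c = arr d \<and> tkey c < tkey d)))"

text \<open>Customer selected when the server becomes free at time c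
  (if nobody is present, the server idles until the next arrival).\<close>
definition sel :: "real \<Rightarrow> (nat \<times> cust) list \<Rightarrow> nat \<times> cust" where
  "sel c xs = (let c' = max c (Min ((arr \<circ> snd) ` set xs));
                   E = filter (\<lambda>p. arr (snd p) \<le> c') xs
               in foldl (\<lambda>b p. if before (snd p) (snd b) then p else b) (hd E) (tl E))"

text \<open>start k c xs i: start of service of the customer with identifier i, when
  the server is free from time c on and xs are the customers not yet served
  (k is fuel; k \<ge> length xs suffices).\<close>
primrec start :: "nat \<Rightarrow> real \<Rightarrow> (nat \<times> cust) list \<Rightarrow> nat \<Rightarrow> real" where
  "start 0 c xs i = 0"
| "start (Suc k) c xs i =
     (if xs = [] then 0 else
        (let p = sel c xs; s = max c (arr (snd p)) in
          if fst p = i then s else start k (s + serv (snd p)) (remove1 p xs) i))"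

text \<open>Waiting time of the tagged walk-in (identifier 0) arriving at t with key u
  and service time v, scheduled customers at times tau with service times ss,
  and n other walk-ins with (arrival, key, service) given by ws.
  The server starts serving at time 0.\<close>
definition wait_tagged ::
  "real list \<Rightarrow> real \<Rightarrow> real \<times> real \<Rightarrow> (nat \<Rightarrow> real) \<Rightarrow> nat \<Rightarrow> (nat \<Rightarrow> real \<times> real \<times> real) \<Rightarrow> real"
where
  "wait_tagged tau t uv ss n ws =
    (let M = length tau;
         tagged = [(0::nat, (t, False, fst uv, snd uv))];
         schs = map (\<lambda>j. (Suc j, (tau ! j, True, 0, ss j))) [0..<M];
         wks = map (\<lambda>j. (Suc (M + j), (fst (ws j), False, fst (snd (ws j)), snd (snd (ws j))))) [0..<n];
         xs = tagged @ schs @ wks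
     in start (length xs) 0 xs 0 - t)"

definition unif01 :: "real measure" where
  "unif01 = uniform_measure lborel {0..1}"

definition expo :: "real \<Rightarrow> real measure" where
  "expo mu = density lborel (\<lambda>x. ennreal (exponential_density mu x))"

text \<open>Law of (arrival time, key, service time) of one other walk-in.\<close>
definition walkin_law :: "real \<Rightarrow> real measure \<Rightarrow> (real \<times> real \<times> real) measure" where
  "walkin_law mu F = F \<Otimes>\<^sub>M (unif01 \<Otimes>\<^sub>M expo mu)"

text \<open>E_w(t): expected waiting time of a walk-in arriving at t when the number of
  other walk-ins is Poisson(lam) and each uses F.\<close>
definition Ew :: "real \<Rightarrow> real \<Rightarrow> real list \<Rightarrow> real measure \<Rightarrow> real \<Rightarrow> ennreal" where
  "Ew lam mu tau F t =
    (\<Sum>n. ennreal (pmf (poisson_pmf lam) n) *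
       (\<integral>\<^sup>+ \<omega>. ennreal (wait_tagged tau t (fst \<omega>) (fst (snd \<omega>)) n (snd (snd \<omega>)))
          \<partial>((unif01 \<Otimes>\<^sub>M expo mu) \<Otimes>\<^sub>M
             (PiM {..<length tau} (\<lambda>_. expo mu) \<Otimes>\<^sub>M PiM {..<n} (\<lambda>_. walkin_law mu F)))))"

definition dist_support :: "real measure \<Rightarrow> real set" where
  "dist_support F = {t. \<forall>e>0. measure F {t - e<..<t + e} > 0}"

definition is_equilibrium ::
  "real \<Rightarrow> real \<Rightarrow> real list \<Rightarrow> real set \<Rightarrow> real measure \<Rightarrow> bool" where
  "is_equilibrium lam mu tau A F \<longleftrightarrow>
     real_distribution F \<and> emeasure F A = 1 \<and>
     (\<exists>c. (\<forall>t\<in>dist_support F. Ew lam mu tau F t = c) \<and>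
          (\<forall>t\<in>A - dist_support F. c \<le> Ew lam mu tau F t))"

end

theory Submission
  imports Defs
begin

definition fix0 :: "nat \<times> cust \<Rightarrow> nat \<times> cust" where
  "fix0 p = (if fst p = 0 then (0, (0, snd (snd p))) else p)"

definition Inv :: "(nat \<times> cust) list \<Rightarrow> bool" where
  "Inv xs \<longleftrightarrow> distinct xs \<and> inj_on fst (set xs) \<and>
    (\<forall>p\<in>set xs. if fst p = 0 then arr (snd p) \<le> 0 \<and> \<not> sched (snd p)
       else 0 \<le> arr (snd p) \<and> (\<not> sched (snd p) \<longrightarrow> 0 < arr (snd p)) \<and> 0 \<le> serv (snd p))"

lemma fix0_simps[simp]:
  "fst (fix0 p) = fst p"
  "arr (snd (fix0 p)) = (if fst p = 0 then 0 else arr (snd p))"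
  "sched (snd (fix0 p)) = sched (snd p)"
  "tkey (snd (fix0 p)) = tkey (snd p)"
  "serv (snd (fix0 p)) = serv (snd p)"
  by (auto simp: fix0_def arr_def sched_def tkey_def serv_def)

lemma before_fix0:
  assumes "Inv xs" "p \<in> set xs" "q \<in> set xs"
  shows "before (snd (fix0 p)) (snd (fix0 q)) = before (snd p) (snd q)"
proof (cases "fst p = fst q")
  case True
  with assms have "p = q" unfolding Inv_def by (meson inj_onD)
  then show ?thesis by (auto simp: before_def)
next
  case False
  have P: "if fst p = 0 then arr (snd p) \<le> 0 \<and> \<not> sched (snd p)
       else 0 \<le> arr (snd p) \<and> (\<not> sched (snd p) \<longrightarrow> 0 < arr (snd p)) \<and> 0 \<le> serv (snd p)"
    using assms unfolding Inv_def by blast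
  have Q: "if fst q = 0 then arr (snd q) \<le> 0 \<and> \<not> sched (snd q)
       else 0 \<le> arr (snd q) \<and> (\<not> sched (snd q) \<longrightarrow> 0 < arr (snd q)) \<and> 0 \<le> serv (snd q)"
    using assms unfolding Inv_def by blast
  show ?thesis using False P Q
    by (cases "fst p = 0"; cases "fst q = 0"; auto simp: before_def split: if_splits)
qed

definition selg :: "nat \<times> cust \<Rightarrow> nat \<times> cust \<Rightarrow> nat \<times> cust" where
  "selg b p = (if before (snd p) (snd b) then p else b)"

lemma foldl_fix0:
  assumes "Inv xs" "set (b # ys) \<subseteq> set xs"
  shows "foldl selg (fix0 b) (map fix0 ys) = fix0 (foldl selg b ys)
         \<and> foldl selg b ys \<in> set (b # ys)"
  using assms(2)
proof (induction ys arbitrary: b)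
  case Nil then show ?case by simp
next
  case (Cons y ys)
  have "selg (fix0 b) (fix0 y) = fix0 (selg b y)"
    using before_fix0[OF assms(1), of y b] Cons.prems by (auto simp: selg_def)
  moreover have "set (selg b y # ys) \<subseteq> set xs" using Cons.prems by (auto simp: selg_def)
  moreover have "selg b y \<in> set (b # y # ys)" by (auto simp: selg_def)
  ultimately show ?case using Cons.IH[of "selg b y"] by auto
qed

lemma sel_fix0:
  assumes "Inv xs" "xs \<noteq> []" "0 \<le> c"
  shows "sel c (map fix0 xs) = fix0 (sel c xs) \<and> sel c xs \<in> set xs"
proof -
  define A where "A = (arr \<circ> snd) ` set xs"
  define A' where "A' = (arr \<circ> snd) ` set (map fix0 xs)"
  define c' where "c' = max c (Min A)"
  have fA: "finite A" "A \<noteq> {}" using assms(2) by (auto simp: A_def)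
  have fA': "finite A'" "A' \<noteq> {}" using assms(2) by (auto simp: A'_def)
  have cc: "max c (Min A') = c'"
  proof (cases "\<exists>p\<in>set xs. fst p = 0")
    case True
    then obtain p where p: "p \<in> set xs" "fst p = 0" by blast
    then have "arr (snd p) \<le> 0" using assms(1) unfolding Inv_def by fastforce
    then have "Min A \<le> 0" using fA p by (intro Min.coboundedI[THEN order.trans]) (auto simp: A_def)
    moreover have "Min A' \<le> 0" using fA' p
      by (intro Min.coboundedI[THEN order.trans, of _ 0]) (auto simp: A'_def image_iff intro!: bexI[of _ p])
    ultimately show ?thesis using assms(3) by (simp add: c'_def)
  next
    case False
    then have "map fix0 xs = xs" by (intro map_idI) (auto simp: fix0_def)
    then show ?thesis by (simp add: c'_def A_def A'_def)
  qed
  have c'0: "0 \<le> c'" using assms(3) by (simp add: c'_def)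
  define E where "E = filter (\<lambda>p. arr (snd p) \<le> c') xs"
  have fe: "filter (\<lambda>p. arr (snd p) \<le> c') (map fix0 xs) = map fix0 E"
    unfolding E_def filter_map
  proof (intro arg_cong[where f="map fix0"] filter_cong refl)
    fix p assume p: "p \<in> set xs"
    show "((\<lambda>p. arr (snd p) \<le> c') \<circ> fix0) p = (arr (snd p) \<le> c')"
      using p assms(1) c'0 unfolding Inv_def by (cases "fst p = 0") force+
  qed
  have "Min A \<in> A" using fA by simp
  then obtain q where q: "q \<in> set xs" "arr (snd q) = Min A" by (auto simp: A_def)
  then have "q \<in> set E" by (auto simp: E_def c'_def)
  then have Ene: "E \<noteq> []" by auto
  have Esub: "set E \<subseteq> set xs" by (auto simp: E_def)
  have sel1: "sel c xs = foldl selg (hd E) (tl E)"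
    unfolding sel_def Let_def E_def c'_def A_def selg_def by simp
  have sel2: "sel c (map fix0 xs) = foldl selg (fix0 (hd E)) (map fix0 (tl E))"
    unfolding sel_def Let_def cc[unfolded A'_def] fe using Ene
    by (cases E) (simp_all add: selg_def[abs_def])
  have hs: "set (hd E # tl E) \<subseteq> set xs" using Ene Esub by (cases E) auto
  show ?thesis using foldl_fix0[OF assms(1) hs] sel1 sel2 hs by auto
qed

lemma remove1_map_inj:
  assumes "inj_on f (set xs)" "p \<in> set xs"
  shows "remove1 (f p) (map f xs) = map f (remove1 p xs)"
  using assms
proof (induction xs)
  case Nil then show ?case by simp
next
  case (Cons x xs)
  show ?case
  proof (cases "x = p")
    case True then show ?thesis by simp
  next
    case False
    then have "f x \<noteq> f p" using Cons.prems by (auto dest: inj_onD)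
    then show ?thesis using Cons False by (auto simp: inj_on_insert)
  qed
qed

lemma start_fix0:
  assumes "Inv xs" "0 \<le> c"
  shows "start k c (map fix0 xs) 0 = start k c xs 0"
  using assms
proof (induction k arbitrary: c xs)
  case 0 then show ?case by simp
next
  case (Suc k)
  show ?case
  proof (cases "xs = []")
    case True then show ?thesis by simp
  next
    case False
    define p where "p = sel c xs"
    have sp: "sel c (map fix0 xs) = fix0 p" "p \<in> set xs"
      using sel_fix0[OF Suc.prems(1) False Suc.prems(2)] by (auto simp: p_def)
    have Pp: "if fst p = 0 then arr (snd p) \<le> 0 \<and> \<not> sched (snd p)
       else 0 \<le> arr (snd p) \<and> (\<not> sched (snd p) \<longrightarrow> 0 < arr (snd p)) \<and> 0 \<le> serv (snd p)"
      using Suc.prems(1) sp(2) unfolding Inv_def by blast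
    have ss: "max c (arr (snd (fix0 p))) = max c (arr (snd p))"
      using Pp Suc.prems(2) by (auto split: if_splits)
    have inj: "inj_on fix0 (set xs)"
      using Suc.prems(1) unfolding Inv_def by (metis fix0_simps(1) inj_on_def)
    have rm: "remove1 (fix0 p) (map fix0 xs) = map fix0 (remove1 p xs)"
      by (rule remove1_map_inj[OF inj sp(2)])
    have Inv': "Inv (remove1 p xs)"
      using Suc.prems(1) unfolding Inv_def
      using set_remove1_subset[of p xs] by (auto intro: inj_on_subset)
    show ?thesis
    proof (cases "fst p = 0")
      case True
      then show ?thesis using False sp ss by (simp add: Let_def p_def[symmetric])
    next
      case F2: False
      have "0 \<le> max c (arr (snd p)) + serv (snd p)" using Pp F2 Suc.prems(2) by auto
      then show ?thesis using False sp ss F2 rm Suc.IH[OF Inv'] by (simp add: Let_def p_def[symmetric])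
    qed
  qed
qed

lemma wait_le:
  assumes t: "t \<le> 0" and tau: "\<forall>x\<in>set tau. 0 \<le> x" and ss: "\<forall>j<length tau. 0 \<le> ss j"
    and ws: "\<forall>j<n. 0 < fst (ws j) \<and> 0 \<le> snd (snd (ws j))"
  shows "ennreal (wait_tagged tau 0 uv ss n ws) \<le> ennreal (wait_tagged tau t uv ss n ws)"
proof -
  define M where "M = length tau"
  define schs where "schs = map (\<lambda>j. (Suc j, (tau ! j, True, 0::real, ss j))) [0..<M]"
  define wks where "wks = map (\<lambda>j. (Suc (M + j), (fst (ws j), False, fst (snd (ws j)), snd (snd (ws j))))) [0..<n]"
  define xs where "xs = [(0::nat, (t, False, fst uv, snd uv))] @ schs @ wks"
  define ys where "ys = [(0::nat, (0::real, False, fst uv, snd uv))] @ schs @ wks"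
  have m: "map fix0 xs = ys"
    unfolding xs_def ys_def schs_def wks_def by (auto simp: fix0_def)
  have fx: "map fst xs = 0 # map Suc [0..<M] @ map (\<lambda>j. Suc (M + j)) [0..<n]"
    unfolding xs_def schs_def wks_def by simp
  have dfx: "distinct (map fst xs)" unfolding fx
    by (auto simp: distinct_map inj_on_def)
  have I: "Inv xs" unfolding Inv_def
  proof (intro conjI)
    show "distinct xs" using dfx distinct_map by blast
    show "inj_on fst (set xs)" using dfx distinct_map by blast
    show "\<forall>p\<in>set xs. if fst p = 0 then arr (snd p) \<le> 0 \<and> \<not> sched (snd p)
       else 0 \<le> arr (snd p) \<and> (\<not> sched (snd p) \<longrightarrow> 0 < arr (snd p)) \<and> 0 \<le> serv (snd p)"
      using t tau ss ws unfolding xs_def schs_def wks_def M_def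
      by (auto simp: arr_def sched_def serv_def less_imp_le)
  qed
  have "start (length xs) 0 ys 0 = start (length xs) 0 xs 0"
    using start_fix0[OF I, of 0 "length xs"] m by simp
  moreover have "length ys = length xs" using m[symmetric] by simp
  ultimately have "wait_tagged tau 0 uv ss n ws = start (length xs) 0 xs 0"
    "wait_tagged tau t uv ss n ws = start (length xs) 0 xs 0 - t"
    unfolding wait_tagged_def Let_def xs_def ys_def schs_def wks_def M_def by simp_all
  then show ?thesis using t by (simp add: ennreal_leI)
qed


lemma AE_fst_pair:
  assumes "prob_space M2" "AE x in M1. P x"
  shows "AE z in M1 \<Otimes>\<^sub>M M2. P (fst z)"
  apply (rule AE_distrD[of fst _ M1])
   apply simp
  apply (subst prob_space.distr_pair_fst[OF assms(1)])
  apply (rule assms(2))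
  done

lemma distr_pair_snd':
  assumes "prob_space M1" "prob_space M2"
  shows "distr (M1 \<Otimes>\<^sub>M M2) M2 snd = M2"
proof (intro measure_eqI)
  interpret M1: prob_space M1 by fact
  interpret M2: prob_space M2 by fact
  interpret pair_sigma_finite M1 M2 by unfold_locales
  fix A assume A: "A \<in> sets (distr (M1 \<Otimes>\<^sub>M M2) M2 snd)"
  from A have "emeasure (distr (M1 \<Otimes>\<^sub>M M2) M2 snd) A = emeasure (M1 \<Otimes>\<^sub>M M2) (space M1 \<times> A)"
    by (auto simp add: emeasure_distr space_pair_measure dest: sets.sets_into_space intro!: arg_cong2[where f=emeasure])
  with A show "emeasure (distr (M1 \<Otimes>\<^sub>M M2) M2 snd) A = emeasure M2 A"
    using M2.emeasure_pair_measure_Times[of "space M1" M1 A] by (simp add: M1.emeasure_space_1)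
qed simp

lemma AE_snd_pair:
  assumes "prob_space M1" "prob_space M2" "AE x in M2. P x"
  shows "AE z in M1 \<Otimes>\<^sub>M M2. P (snd z)"
  apply (rule AE_distrD[of snd _ M2])
   apply simp
  apply (subst distr_pair_snd'[OF assms(1,2)])
  apply (rule assms(3))
  done

lemma prob_expo: "0 < mu \<Longrightarrow> prob_space (expo mu)"
  unfolding expo_def by (rule prob_space_exponential_density)

lemma AE_expo: "AE x in expo mu. 0 \<le> x"
  unfolding expo_def
  by (subst AE_density) (auto simp: exponential_density_def)

lemma prob_unif: "prob_space unif01"
  unfolding unif01_def by (rule prob_space_uniform_measure) auto

lemma AE_F_pos:
  assumes "real_distribution F" "\<not> (cdf F 0 > 0)"
  shows "AE x in F. 0 < x"
proof -
  interpret real_distribution F by fact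
  have "cdf F 0 = 0" using assms(2) cdf_nonneg[of 0] by linarith
  then have "emeasure F {..0} = 0" by (simp add: cdf_def emeasure_eq_measure)
  then show ?thesis
    by (intro AE_I[of _ _ "{..0}"]) auto
qed

lemma prob_walkin: "real_distribution F \<Longrightarrow> 0 < mu \<Longrightarrow> prob_space (walkin_law mu F)"
  unfolding walkin_law_def
  by (intro prob_space_pair prob_unif prob_expo) (auto simp: real_distribution_def)

lemma AE_walkin:
  assumes "real_distribution F" "\<not> (cdf F 0 > 0)" "0 < mu"
  shows "AE w in walkin_law mu F. 0 < fst w \<and> 0 \<le> snd (snd w)"
proof -
  have pF: "prob_space F" using assms(1) by (simp add: real_distribution_def)
  have pU: "prob_space (unif01 \<Otimes>\<^sub>M expo mu)" by (intro prob_space_pair prob_unif prob_expo assms(3))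
  have "AE w in walkin_law mu F. 0 < fst w"
    unfolding walkin_law_def by (rule AE_fst_pair[OF pU AE_F_pos[OF assms(1,2)]])
  moreover have "AE w in walkin_law mu F. 0 \<le> snd (snd w)"
    unfolding walkin_law_def
    by (rule AE_snd_pair[OF pF pU AE_snd_pair[OF prob_unif prob_expo[OF assms(3)] AE_expo]])
  ultimately show ?thesis by eventually_elim auto
qed

lemma AE_PiM_all:
  fixes k :: nat
  assumes "\<And>i. prob_space (N i)" "\<And>i. i < k \<Longrightarrow> AE x in N i. P i x"
  shows "AE f in PiM {..<k} N. \<forall>j<k. P j (f j)"
proof -
  interpret product_prob_space N "{..<k}"
    by (intro product_prob_spaceI assms(1))
  have "\<forall>j\<in>{..<k}. AE f in PiM {..<k} N. P j (f j)"
    using AE_component assms(2) by blast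
  then have "AE f in PiM {..<k} N. \<forall>j\<in>{..<k}. P j (f j)"
    by (intro eventually_ball_finite) simp_all
  then show ?thesis by auto
qed

lemma Ew_mono:
  assumes mu: "0 < mu" and F: "real_distribution F" "\<not> (cdf F 0 > 0)"
    and tau: "\<forall>x\<in>set tau. 0 \<le> x" and t: "t \<le> 0"
  shows "Ew lam mu tau F 0 \<le> Ew lam mu tau F t"
  unfolding Ew_def
proof (intro suminf_le mult_left_mono nn_integral_mono_AE)
  fix n :: nat
  have pE: "prob_space (PiM {..<length tau} (\<lambda>_. expo mu))"
    by (intro prob_space_PiM prob_expo mu)
  have pW: "prob_space (PiM {..<n} (\<lambda>_. walkin_law mu F))"
    by (intro prob_space_PiM prob_walkin F mu)
  have pU: "prob_space (unif01 \<Otimes>\<^sub>M expo mu)" by (intro prob_space_pair prob_unif prob_expo mu)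
  have a1: "AE z in PiM {..<length tau} (\<lambda>_. expo mu) \<Otimes>\<^sub>M PiM {..<n} (\<lambda>_. walkin_law mu F).
      \<forall>j<length tau. 0 \<le> fst z j"
    by (rule AE_fst_pair[OF pW AE_PiM_all[where k="length tau", OF prob_expo[OF mu] AE_expo]])
  have a2: "AE z in PiM {..<length tau} (\<lambda>_. expo mu) \<Otimes>\<^sub>M PiM {..<n} (\<lambda>_. walkin_law mu F).
      \<forall>j<n. 0 < fst (snd z j) \<and> 0 \<le> snd (snd (snd z j))"
    by (rule AE_snd_pair[OF pE pW AE_PiM_all[where k=n, OF prob_walkin[OF F(1) mu] AE_walkin[OF F mu]]])
  have a3: "AE z in PiM {..<length tau} (\<lambda>_. expo mu) \<Otimes>\<^sub>M PiM {..<n} (\<lambda>_. walkin_law mu F).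
      (\<forall>j<length tau. 0 \<le> fst z j) \<and> (\<forall>j<n. 0 < fst (snd z j) \<and> 0 \<le> snd (snd (snd z j)))"
    using a1 a2 by eventually_elim auto
  have pp: "prob_space (PiM {..<length tau} (\<lambda>_. expo mu) \<Otimes>\<^sub>M PiM {..<n} (\<lambda>_. walkin_law mu F))"
    by (intro prob_space_pair pE pW)
  show "AE \<omega> in (unif01 \<Otimes>\<^sub>M expo mu) \<Otimes>\<^sub>M
             (PiM {..<length tau} (\<lambda>_. expo mu) \<Otimes>\<^sub>M PiM {..<n} (\<lambda>_. walkin_law mu F)).
      ennreal (wait_tagged tau 0 (fst \<omega>) (fst (snd \<omega>)) n (snd (snd \<omega>)))
      \<le> ennreal (wait_tagged tau t (fst \<omega>) (fst (snd \<omega>)) n (snd (snd \<omega>)))"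
    using AE_snd_pair[OF pU pp a3]
  proof eventually_elim
    case (elim \<omega>)
    then show ?case using wait_le[OF t tau] by blast
  qed
qed (simp_all add: summableI)

theorem mainTheorem6:
  fixes lam mu T :: real and tau :: "real list" and F :: "real measure"
  assumes "0 < lam" and "0 < mu"
    and "sorted_wrt (<) tau" and "set tau \<subseteq> {0..T}"
    and "is_equilibrium lam mu tau {0..T} F"
    and "\<not> (cdf F 0 > 0)"
  shows "is_equilibrium lam mu tau {..T} F"
proof -
  have rd: "real_distribution F" and e1: "emeasure F {0..T} = 1"
    using assms(5) by (auto simp: is_equilibrium_def)
  obtain c where c1: "\<forall>t\<in>dist_support F. Ew lam mu tau F t = c"
    and c2: "\<forall>t\<in>{0..T} - dist_support F. c \<le> Ew lam mu tau F t"
    using assms(5) by (auto simp: is_equilibrium_def)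
  interpret real_distribution F by (rule rd)
  have T0: "0 \<le> T"
  proof (rule ccontr)
    assume "\<not> 0 \<le> T" then have "{0..T} = {}" by auto
    then show False using e1 by simp
  qed
  have "emeasure F {0..T} \<le> emeasure F {..T}"
    by (intro emeasure_mono) auto
  moreover have "emeasure F {..T} \<le> 1" by (rule emeasure_le_1)
  ultimately have e2: "emeasure F {..T} = 1" using e1 by simp
  have tau0: "\<forall>x\<in>set tau. 0 \<le> x" using assms(4) by auto
  have c0: "c \<le> Ew lam mu tau F 0"
    using c1 c2 T0 by (cases "0 \<in> dist_support F") auto
  have "\<forall>t\<in>{..T} - dist_support F. c \<le> Ew lam mu tau F t"
  proof
    fix t assume t: "t \<in> {..T} - dist_support F"
    show "c \<le> Ew lam mu tau F t"
    proof (cases "0 \<le> t")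
      case True then show ?thesis using t c2 by auto
    next
      case False
      then show ?thesis
        using c0 Ew_mono[OF assms(2) rd assms(6) tau0, of t lam] by auto
    qed
  qed
  then show ?thesis unfolding is_equilibrium_def using rd e2 c1 by blast
qed

end
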